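(* For every $A\in\mathbb{M}_n$, $$\|A\|_1=\sup\Big\{\sum_{i=1}^k\|C_iAC_i^*\|_\infty : k\in\mathbb{N},\ C_1,\dots,C_k\in\mathbb{M}_n,\ \sum_{i=1}^k C_i^*C_i=I\Big\},$$ and the trace norm $\|\cdot\|_1$ is the minimum element of the class of $L$-norms $\||\cdot\||$ on $\mathbb{M}_n$ satisfying $\|\cdot\|_\infty\le\||\cdot\||$.
   Context: $\mathbb{M}_n$ is the algebra of complex $n\times n$ matrices with identity $I$; $\|\cdot\|_\infty$ is the operator norm and $\|A\|_1=\mathrm{Tr}(|A|)$ the trace norm. A norm $\||\cdot\||$ on $\mathbb{M}_n$ is an $L$-norm if $\sum_{i=1}^k\||C_iXC_i^*\||\le\||X\||$ for all $k$, all $X$ and all $C_i$ with $\sum_{i=1}^k C_i^*C_i=I$. Inequalities between norms are pointwise. *)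

theory Defs
  imports "HOL-Analysis.Analysis"
begin

text \<open>Complex n x n matrices, with n the cardinality of the finite index type 'n.\<close>
type_synonym 'n cmat = "complex^'n^'n"

definition cadj :: "'n::finite cmat \<Rightarrow> 'n cmat" where
  "cadj A = (\<chi> i j. cnj (A $ j $ i))"

text \<open>Standard Hermitian form on complex^n (conjugate-linear in the first slot).\<close>
definition cinner :: "complex^'n::finite \<Rightarrow> complex^'n \<Rightarrow> complex" where
  "cinner x y = (\<Sum>i\<in>UNIV. cnj (x $ i) * y $ i)"

definition psd :: "'n::finite cmat \<Rightarrow> bool" where
  "psd B \<longleftrightarrow> cadj B = B \<and> (\<forall>x. 0 \<le> Re (cinner x (B *v x)))"

text \<open>|A| = (A^* A)^{1/2}, the unique positive semidefinite square root.\<close>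
definition mabs :: "'n::finite cmat \<Rightarrow> 'n cmat" where
  "mabs A = (THE B. psd B \<and> B ** B = cadj A ** A)"

definition opnorm :: "'n::finite cmat \<Rightarrow> real" where
  "opnorm A = onorm (\<lambda>x. A *v x)"

text \<open>Trace norm ||A||_1 = Tr |A| (real since |A| is Hermitian).\<close>
definition trnorm :: "'n::finite cmat \<Rightarrow> real" where
  "trnorm A = Re (trace (mabs A))"

definition is_matrix_norm :: "('n::finite cmat \<Rightarrow> real) \<Rightarrow> bool" where
  "is_matrix_norm N \<longleftrightarrow>
     (\<forall>X. 0 \<le> N X) \<and> (\<forall>X. N X = 0 \<longleftrightarrow> X = 0) \<and>
     (\<forall>c X. N (\<chi> i j. c * X $ i $ j) = cmod c * N X) \<and> (\<forall>X Y. N (X + Y) \<le> N X + N Y)"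

definition is_L_norm :: "('n::finite cmat \<Rightarrow> real) \<Rightarrow> bool" where
  "is_L_norm N \<longleftrightarrow> is_matrix_norm N \<and>
     (\<forall>(k::nat) (C::nat \<Rightarrow> 'n cmat) X.
        (\<Sum>i<k. cadj (C i) ** C i) = mat 1 \<longrightarrow>
        (\<Sum>i<k. N (C i ** X ** cadj (C i))) \<le> N X)"

end

theory Submission
  imports Defs
begin

definition outer :: "complex^'n::finite \<Rightarrow> complex^'n \<Rightarrow> 'n cmat" where
  "outer u v = (\<chi> i j. u$i * cnj (v$j))"

definition smat :: "complex \<Rightarrow> 'n::finite cmat \<Rightarrow> 'n cmat" where
  "smat c M = (\<chi> i j. c * M$i$j)"

lemma cadj_cadj[simp]: "cadj (cadj A) = A"
  by (simp add: cadj_def vec_eq_iff)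

lemma cadj_mult: "cadj (A ** B) = cadj B ** cadj A"
  by (simp add: cadj_def matrix_matrix_mult_def vec_eq_iff mult.commute)

lemma cadj_add: "cadj (A + B) = cadj A + cadj B"
  by (simp add: cadj_def vec_eq_iff)

lemma cadj_zero[simp]: "cadj 0 = 0"
  by (simp add: cadj_def vec_eq_iff)

lemma cadj_sum: "cadj (sum f S) = sum (\<lambda>i. cadj (f i)) S"
  by (induction S rule: infinite_finite_induct) (auto simp: cadj_add)

lemma cadj_mat1[simp]: "cadj (mat 1) = mat 1"
  by (simp add: cadj_def mat_def vec_eq_iff)

lemma cadj_smat: "cadj (smat c A) = smat (cnj c) (cadj A)"
  by (simp add: cadj_def smat_def vec_eq_iff)

lemma cinner_adj: "cinner x (A *v y) = cinner (cadj A *v x) y"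
  by (simp add: cinner_def cadj_def matrix_vector_mult_def sum_distrib_left sum_distrib_right
      sum_divide_distrib mult_ac) (rule sum.swap)

lemma cinner_add_right: "cinner x (y + z) = cinner x y + cinner x z"
  by (simp add: cinner_def distrib_left sum.distrib)
lemma cinner_add_left: "cinner (x + y) z = cinner x z + cinner y z"
  by (simp add: cinner_def distrib_right sum.distrib)
lemma cinner_diff_right: "cinner x (y - z) = cinner x y - cinner x z"
  by (simp add: cinner_def right_diff_distrib sum_subtractf)
lemma cinner_diff_left: "cinner (x - y) z = cinner x z - cinner y z"
  by (simp add: cinner_def left_diff_distrib sum_subtractf)
lemma cinner_scale_right: "cinner x (c *s y) = c * cinner x y"
  by (simp add: cinner_def sum_distrib_left mult_ac)
lemma cinner_scale_left: "cinner (c *s x) y = cnj c * cinner x y"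
  by (simp add: cinner_def sum_distrib_left mult_ac)
lemma cinner_zero_left[simp]: "cinner 0 y = 0" by (simp add: cinner_def)
lemma cinner_zero_right[simp]: "cinner x 0 = 0" by (simp add: cinner_def)
lemma cinner_commute: "cinner y x = cnj (cinner x y)"
  by (simp add: cinner_def mult.commute)
lemma cinner_sum_right: "cinner x (sum f S) = (\<Sum>i\<in>S. cinner x (f i))"
  by (induction S rule: infinite_finite_induct) (auto simp: cinner_add_right)
lemma cinner_sum_left: "cinner (sum f S) y = (\<Sum>i\<in>S. cinner (f i) y)"
  by (induction S rule: infinite_finite_induct) (auto simp: cinner_add_left)

lemma cinner_self: "cinner x x = complex_of_real ((norm x)\<^sup>2)"
proof -
  have "cinner x x = (\<Sum>i\<in>UNIV. complex_of_real ((cmod (x$i))\<^sup>2))"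
    unfolding cinner_def by (intro sum.cong refl) (metis complex_norm_square mult.commute)
  also have "\<dots> = complex_of_real (\<Sum>i\<in>UNIV. (cmod (x$i))\<^sup>2)" by simp
  also have "(\<Sum>i\<in>UNIV. (cmod (x$i))\<^sup>2) = (norm x)\<^sup>2"
    by (simp add: norm_vec_def L2_set_def sum_nonneg)
  finally show ?thesis .
qed

lemma cinner_self_eq_0[simp]: "cinner x x = 0 \<longleftrightarrow> x = 0"
  by (simp add: cinner_self)

lemma inner_eq_Re_cinner: "inner x y = Re (cinner x y)"
  by (simp add: inner_vec_def cinner_def inner_complex_def Re_sum)

lemma mv_add: "A *v (x + y) = A *v x + A *v (y::complex^'n::finite)"
  by (simp add: matrix_vector_right_distrib)
lemma mv_scale: "A *v (c *s x) = c *s (A *v (x::complex^'n::finite))"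
  by (simp add: matrix_vector_mult_def vector_scalar_mult_def vec_eq_iff sum_distrib_left mult_ac)
lemma mv_diff: "A *v (x - y) = A *v x - A *v (y::complex^'n::finite)"
  by (simp add: matrix_vector_mult_def vec_eq_iff right_diff_distrib sum_subtractf)
lemma mv_sum_right: "A *v (sum f S) = (\<Sum>i\<in>S. A *v (f i::complex^'n::finite))"
  by (induction S rule: infinite_finite_induct) (auto simp: mv_add)
lemma madd_v: "(A + B) *v x = A *v x + B *v (x::complex^'n::finite)"
  by (simp add: matrix_vector_mult_add_rdistrib)
lemma msum_v: "(sum f S) *v x = (\<Sum>i\<in>S. f i *v (x::complex^'n::finite))"
  by (induction S rule: infinite_finite_induct) (auto simp: madd_v)
lemma mv_zero[simp]: "A *v 0 = (0::complex^'n::finite)"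
  by (simp add: matrix_vector_mult_def vec_eq_iff)
lemma zero_mv[simp]: "(0::'n::finite cmat) *v x = 0"
  by (simp add: matrix_vector_mult_def vec_eq_iff)

lemma outer_mv: "outer u v *v x = cinner v x *s u"
  by (simp add: outer_def cinner_def matrix_vector_mult_def vector_scalar_mult_def vec_eq_iff
      sum_distrib_left sum_distrib_right mult_ac)
lemma mult_outer: "A ** outer u v = outer (A *v u) v"
  by (simp add: outer_def matrix_matrix_mult_def matrix_vector_mult_def vec_eq_iff
      sum_distrib_left sum_distrib_right mult_ac)
lemma outer_mult: "outer u v ** A = outer u (cadj A *v v)"
  by (simp add: outer_def matrix_matrix_mult_def matrix_vector_mult_def cadj_def vec_eq_iff
      sum_distrib_left mult_ac)
lemma cadj_outer: "cadj (outer u v) = outer v u"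
  by (simp add: outer_def cadj_def vec_eq_iff)
lemma trace_outer: "trace (outer u v) = cinner v u"
  by (simp add: outer_def trace_def cinner_def mult.commute)
lemma outer_scale_left: "outer (c *s u) v = smat c (outer u v)"
  by (simp add: outer_def smat_def vector_scalar_mult_def vec_eq_iff mult_ac)
lemma smat_v: "smat c A *v x = c *s (A *v x)"
  by (simp add: smat_def matrix_vector_mult_def vector_scalar_mult_def vec_eq_iff sum_distrib_left mult_ac)

lemma trace_sum: "trace (sum f S) = (\<Sum>i\<in>S. trace (f i :: 'n::finite cmat))"
  by (induction S rule: infinite_finite_induct) (auto simp: trace_add trace_0[simplified])

lemma cmat_eqI: "(\<And>x. A *v x = B *v (x::complex^'n::finite)) \<Longrightarrow> A = B"
  using matrix_eq by blast

lemma mv_scaleR: "A *v (r *\<^sub>R x) = r *\<^sub>R (A *v (x::complex^'n::finite))"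
  by (simp add: matrix_vector_mult_def vec_eq_iff scaleR_sum_right)

lemma lin_mv: "linear (\<lambda>x::complex^'n::finite. A *v x)"
  by (intro linearI) (simp_all add: mv_add mv_scaleR)

lemma bl_mv: "bounded_linear (\<lambda>x::complex^'n::finite. A *v x)"
  using lin_mv linear_conv_bounded_linear by blast

lemma opnorm_bound: "norm (A *v x) \<le> opnorm A * norm x"
  unfolding opnorm_def by (rule onorm[OF bl_mv])

lemma opnorm_le: "(\<And>x. norm (A *v x) \<le> b * norm x) \<Longrightarrow> opnorm A \<le> b"
  unfolding opnorm_def by (rule onorm_le)

lemma opnorm_nonneg: "0 \<le> opnorm A"
  unfolding opnorm_def by (rule onorm_pos_le[OF bl_mv])

lemma opnorm_add: "opnorm (A + B) \<le> opnorm A + opnorm B"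
proof (rule opnorm_le)
  fix x
  have "norm ((A + B) *v x) \<le> norm (A *v x) + norm (B *v x)"
    by (simp add: madd_v norm_triangle_ineq)
  also have "\<dots> \<le> opnorm A * norm x + opnorm B * norm x"
    by (intro add_mono opnorm_bound)
  finally show "norm ((A + B) *v x) \<le> (opnorm A + opnorm B) * norm x"
    by (simp add: distrib_right)
qed

lemma norm_scale: "norm (c *s (x::complex^'n::finite)) = cmod c * norm x"
proof -
  have "norm (c *s x) = L2_set (\<lambda>i. cmod c * cmod (x$i)) UNIV"
    by (simp add: norm_vec_def vector_scalar_mult_def norm_mult)
  also have "\<dots> = cmod c * norm x"
    by (simp add: norm_vec_def L2_set_right_distrib)
  finally show ?thesis .
qed

lemma cauchy_schwarz: "cmod (cinner x y) \<le> norm x * norm y"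
proof -
  have "cmod (cinner x y) \<le> (\<Sum>i\<in>UNIV. cmod (cnj (x$i) * y$i))"
    unfolding cinner_def by (rule norm_sum)
  also have "\<dots> = (\<Sum>i\<in>UNIV. \<bar>cmod (x$i)\<bar> * \<bar>cmod (y$i)\<bar>)"
    by (simp add: norm_mult)
  also have "\<dots> \<le> L2_set (\<lambda>i. cmod (x$i)) UNIV * L2_set (\<lambda>i. cmod (y$i)) UNIV"
    by (rule L2_set_mult_ineq)
  finally show ?thesis by (simp add: norm_vec_def)
qed

lemma opnorm_smat: "opnorm (smat c A) = cmod c * opnorm A"
proof (rule antisym)
  show "opnorm (smat c A) \<le> cmod c * opnorm A"
  proof (rule opnorm_le)
    fix x
    have "norm (smat c A *v x) = cmod c * norm (A *v x)" by (simp add: smat_v norm_scale)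
    also have "\<dots> \<le> cmod c * (opnorm A * norm x)"
      by (intro mult_left_mono opnorm_bound) simp
    finally show "norm (smat c A *v x) \<le> cmod c * opnorm A * norm x" by (simp add: mult_ac)
  qed
next
  show "cmod c * opnorm A \<le> opnorm (smat c A)"
  proof (cases "c = 0")
    case True then show ?thesis by (simp add: opnorm_nonneg)
  next
    case False
    have "opnorm A \<le> opnorm (smat c A) / cmod c"
    proof (rule opnorm_le)
      fix x
      have "cmod c * norm (A *v x) = norm (smat c A *v x)" by (simp add: smat_v norm_scale)
      also have "\<dots> \<le> opnorm (smat c A) * norm x" by (rule opnorm_bound)
      finally show "norm (A *v x) \<le> opnorm (smat c A) / cmod c * norm x"
        using False by (simp add: field_simps mult_ac)
    qed
    then show ?thesis using False by (simp add: field_simps mult_ac)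
  qed
qed

lemma opnorm_outer_le: "opnorm (outer u v) \<le> norm u * norm v"
proof (rule opnorm_le)
  fix x
  have "norm (outer u v *v x) = cmod (cinner v x) * norm u" by (simp add: outer_mv norm_scale)
  also have "\<dots> \<le> (norm v * norm x) * norm u"
    by (intro mult_right_mono cauchy_schwarz) simp
  finally show "norm (outer u v *v x) \<le> norm u * norm v * norm x" by (simp add: mult_ac)
qed

lemma opnorm_rank1: assumes "norm e = 1" shows "opnorm (smat c (outer e e)) = cmod c"
proof -
  have "opnorm (outer e e) \<le> 1" using opnorm_outer_le[of e e] assms by simp
  moreover have "1 \<le> opnorm (outer e e)"
  proof -
    have "norm (outer e e *v e) = 1" using assms by (simp add: outer_mv norm_scale cinner_self)
    then show ?thesis using opnorm_bound[of "outer e e" e] assms by simp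
  qed
  ultimately show ?thesis by (simp add: opnorm_smat)
qed

lemma opnorm_eq_0: "opnorm A = 0 \<Longrightarrow> A = 0"
proof -
  assume "opnorm A = 0"
  then have "\<And>x. A *v x = 0" using opnorm_bound[of A] by (metis mult_zero_left norm_le_zero_iff)
  then show "A = 0" by (intro cmat_eqI) simp
qed

lemma opnorm_zero[simp]: "opnorm (0::'n::finite cmat) = 0"
  by (rule antisym[OF opnorm_le opnorm_nonneg]) simp

lemma norm_sq_cinner: "(norm x)\<^sup>2 = Re (cinner x x)"
  by (simp add: cinner_self)

definition herm :: "'n::finite cmat \<Rightarrow> bool" where "herm A \<longleftrightarrow> cadj A = A"

lemma scaleR_eq_scale: "r *\<^sub>R (x::complex^'n::finite) = complex_of_real r *s x"
  unfolding vec_eq_iff vector_scalar_mult_def vec_lambda_beta vector_scaleR_component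
  by (simp only: scaleR_conv_of_real simp_thms)

lemma quad0: assumes "\<And>t::real. 2*t*a + t^2*b \<le> 0" shows "a = 0"
proof (rule ccontr)
  assume "a \<noteq> 0"
  define t where "t = \<bar>a\<bar> / (\<bar>b\<bar> + 1)"
  have tpos: "t > 0" using \<open>a \<noteq> 0\<close> by (simp add: t_def)
  have h1: "2*t*a + t^2*b \<le> 0" by (rule assms)
  have h2: "2*(-t)*a + (-t)^2*b \<le> 0" by (rule assms)
  have bb: "t^2 * (-b) \<le> t^2*\<bar>b\<bar>" by (rule mult_left_mono) simp_all
  have "2*t*\<bar>a\<bar> \<le> t^2*\<bar>b\<bar>"
  proof (cases "a \<ge> 0")
    case True then show ?thesis using h1 bb by (simp add: abs_of_nonneg)
  next
    case False then show ?thesis using h2 bb by (simp add: abs_of_neg)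
  qed
  then have "2*\<bar>a\<bar> \<le> t*\<bar>b\<bar>" using tpos by (simp add: power2_eq_square mult.assoc)
  moreover have "t*\<bar>b\<bar> < \<bar>a\<bar>" using \<open>a \<noteq> 0\<close> unfolding t_def
    by (simp add: field_simps)
  ultimately show False using \<open>a \<noteq> 0\<close> by simp
qed

lemma herm_sym: "herm H \<Longrightarrow> cinner x (H *v y) = cinner (H *v x) y"
  unfolding herm_def by (metis cinner_adj)

lemma cont_quad: "continuous_on UNIV (\<lambda>x::complex^'n::finite. Re (cinner x (H *v x)))"
proof -
  have c1: "continuous_on UNIV (\<lambda>x::complex^'n. H *v x)"
    using linear_continuous_on[OF bl_mv] .
  show ?thesis unfolding cinner_def
    by (intro continuous_on_Re continuous_on_sum ballI continuous_on_mult continuous_on_cnj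
        continuous_on_component c1 continuous_on_id)
qed

lemma quad_expand:
  "cinner (x + c *s y) (H *v (x + c *s y)) = cinner x (H *v x) + c * cinner x (H *v y)
     + cnj c * cinner y (H *v x) + cnj c * c * cinner y (H *v y)"
  by (simp add: mv_add mv_scale cinner_add_left cinner_add_right cinner_scale_left
      cinner_scale_right algebra_simps)

lemma quad_scale:
  "cinner (c *s y) (H *v (c *s y)) = cnj c * c * cinner y (H *v y)"
  by (simp add: mv_scale cinner_scale_left cinner_scale_right)

lemma eig_sub:
  fixes H :: "'n::finite cmat" and V :: "(complex^'n) set"
  assumes herm: "herm H"
    and V0: "0 \<in> V" and Vadd: "\<And>x y. x \<in> V \<Longrightarrow> y \<in> V \<Longrightarrow> x + y \<in> V"
    and Vscale: "\<And>c x. x \<in> V \<Longrightarrow> c *s x \<in> V"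
    and Vinv: "\<And>x. x \<in> V \<Longrightarrow> H *v x \<in> V"
    and x0: "x0 \<in> V" "x0 \<noteq> 0"
  shows "\<exists>x\<in>V. norm x = 1 \<and> H *v x = cinner x (H *v x) *s x"
proof -
  define f where "f = (\<lambda>x::complex^'n. Re (cinner x (H *v x)))"
  have sub: "subspace V"
    unfolding subspace_def using V0 Vadd Vscale by (auto simp: scaleR_eq_scale)
  have Vdiff: "x - y \<in> V" if "x \<in> V" "y \<in> V" for x y
    using Vadd[OF that(1) Vscale[OF that(2), of "-1"]]
    by (metis diff_conv_add_uminus vector_sneg_minus1)
  define K where "K = V \<inter> sphere 0 1"
  have "compact K" unfolding K_def
    by (intro closed_Int_compact closed_subspace sub compact_sphere)
  moreover have "K \<noteq> {}"
  proof -
    have "complex_of_real (1 / norm x0) *s x0 \<in> K"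
      using x0 Vscale by (simp add: K_def norm_scale norm_divide)
    then show ?thesis by blast
  qed
  moreover have "continuous_on K f"
    unfolding f_def by (rule continuous_on_subset[OF cont_quad]) simp
  ultimately obtain x where xK: "x \<in> K" and xmax: "\<And>y. y \<in> K \<Longrightarrow> f y \<le> f x"
    using continuous_attains_sup by metis
  have xV: "x \<in> V" and nx: "norm x = 1" using xK by (auto simp: K_def)
  have xx: "cinner x x = 1" using nx by (simp add: cinner_self)
  have key: "Re (cinner y (H *v x)) = 0" if yV: "y \<in> V" and yx: "cinner x y = 0" for y
  proof (rule quad0[where b = "f y - f x * (norm y)^2"])
    fix t :: real
    define z where "z = x + complex_of_real t *s y"
    have zV: "z \<in> V" unfolding z_def by (intro Vadd xV Vscale yV)
    have nz: "(norm z)^2 = 1 + t^2 * (norm y)^2"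
    proof -
      have "cinner z z = cinner x x + complex_of_real t * cinner x y
             + complex_of_real t * cinner y x + complex_of_real t * complex_of_real t * cinner y y"
        unfolding z_def by (simp add: cinner_add_left cinner_add_right cinner_scale_left
            cinner_scale_right algebra_simps)
      moreover have "cinner y x = 0" using yx by (metis cinner_commute complex_cnj_zero)
      ultimately have "cinner z z = 1 + complex_of_real (t^2 * (norm y)^2)"
        using yx xx by (simp add: cinner_self power2_eq_square)
      then show ?thesis by (metis cinner_self of_real_1 of_real_add of_real_eq_iff)
    qed
    then have zpos: "norm z > 0" by (smt (verit) zero_le_power2 mult_nonneg_nonneg norm_ge_zero zero_less_norm_iff power2_eq_square mult_zero_left mult_zero_right zero_eq_power2)
    define z' where "z' = complex_of_real (1 / norm z) *s z"
    have "z' \<in> K" unfolding z'_def K_def using zV Vscale zpos by (simp add: norm_scale norm_divide)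
    then have "f z' \<le> f x" by (rule xmax)
    moreover have "f z' = f z / (norm z)^2"
      unfolding z'_def f_def quad_scale by (simp add: power2_eq_square)
    ultimately have "f z \<le> f x * (norm z)^2" using zpos by (simp add: field_simps)
    moreover have "f z = f x + 2 * t * Re (cinner y (H *v x)) + t^2 * f y"
    proof -
      have "cinner x (H *v y) = cnj (cinner y (H *v x))"
        using herm_sym[OF herm] by (metis cinner_commute)
      then show ?thesis unfolding f_def z_def quad_expand
        by (simp add: power2_eq_square)
    qed
    ultimately show "2 * t * Re (cinner y (H *v x)) + t^2 * (f y - f x * (norm y)^2) \<le> 0"
      using nz by (simp add: algebra_simps)
  qed
  have orth: "cinner y (H *v x) = 0" if yV: "y \<in> V" and yx: "cinner x y = 0" for y
  proof -
    have r: "Re (cinner y (H *v x)) = 0" by (rule key[OF yV yx])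
    have "Re (cinner (\<i> *s y) (H *v x)) = 0"
      by (rule key) (simp_all add: Vscale yV cinner_scale_right yx)
    then have "Im (cinner y (H *v x)) = 0" by (simp add: cinner_scale_left)
    with r show ?thesis by (simp add: complex_eq_iff)
  qed
  define lam where "lam = cinner x (H *v x)"
  define w where "w = H *v x - lam *s x"
  have wV: "w \<in> V" unfolding w_def by (intro Vdiff Vinv xV Vscale)
  have xw: "cinner x w = 0" unfolding w_def lam_def by (simp add: cinner_diff_right cinner_scale_right xx)
  have wx: "cinner w x = 0" using xw by (metis cinner_commute complex_cnj_zero)
  have "cinner w w = cinner w (H *v x) - lam * cinner w x"
    unfolding w_def by (simp add: cinner_diff_right cinner_scale_right)
  also have "\<dots> = 0" using orth[OF wV xw] wx by simp
  finally have "w = 0" by simp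
  then show ?thesis using xV nx unfolding w_def lam_def by (auto simp: algebra_simps)
qed

definition onset :: "(complex^'n::finite) set \<Rightarrow> bool" where
  "onset S \<longleftrightarrow> finite S \<and> (\<forall>x\<in>S. cinner x x = 1) \<and> (\<forall>x\<in>S. \<forall>y\<in>S. x \<noteq> y \<longrightarrow> cinner x y = 0)"

definition cmpl :: "(complex^'n::finite) set \<Rightarrow> bool" where
  "cmpl S \<longleftrightarrow> (\<forall>y. (\<forall>x\<in>S. cinner x y = 0) \<longrightarrow> y = 0)"

lemma onset_card: fixes S :: "(complex^'n::finite) set" assumes "onset S" shows "card S \<le> DIM(complex^'n)"
proof -
  have "pairwise orthogonal S"
    unfolding pairwise_def orthogonal_def
  proof (intro ballI impI)
    fix x y assume "x \<in> S" "y \<in> S" "x \<noteq> y"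
    then have "cinner x y = 0" using assms by (simp add: onset_def)
    then show "x \<bullet> y = 0" by (simp add: inner_eq_Re_cinner)
  qed
  moreover have "0 \<notin> S"
    using assms unfolding onset_def by (metis cinner_zero_left zero_neq_one)
  ultimately have "independent S" by (rule pairwise_orthogonal_independent)
  from independent_bound[OF this] show ?thesis by (rule conjunct2)
qed

lemma onset_delta: assumes "onset S" "t \<in> S" "s \<in> S" shows "cinner t s = (if s = t then 1 else 0)"
  using assms unfolding onset_def by auto

lemma onset_proj: assumes "onset S" "t \<in> S"
  shows "cinner t (\<Sum>s\<in>S. cinner s y *s s) = cinner t y"
proof -
  have "cinner t (\<Sum>s\<in>S. cinner s y *s s) = (\<Sum>s\<in>S. cinner s y * cinner t s)"
    by (simp add: cinner_sum_right cinner_scale_right)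
  also have "\<dots> = (\<Sum>s\<in>S. if s = t then cinner s y else 0)"
    using onset_delta[OF assms(1,2)] by (intro sum.cong) auto
  also have "\<dots> = cinner t y" using assms unfolding onset_def by simp
  finally show ?thesis .
qed

lemma onset_expand: assumes "onset S" "cmpl S" shows "y = (\<Sum>s\<in>S. cinner s y *s s)"
proof -
  have "\<forall>t\<in>S. cinner t (y - (\<Sum>s\<in>S. cinner s y *s s)) = 0"
    using onset_proj[OF assms(1)] by (simp add: cinner_diff_right)
  then show ?thesis using assms(2) unfolding cmpl_def by fastforce
qed

lemma onset_sum_outer: assumes "onset S" "cmpl S" shows "(\<Sum>s\<in>S. outer s s) = mat 1"
proof (rule cmat_eqI)
  fix y
  show "(\<Sum>s\<in>S. outer s s) *v y = mat 1 *v y"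
    using onset_expand[OF assms, of y, symmetric] by (simp add: msum_v outer_mv)
qed

lemma cinner_zero_sym: "cinner s x = 0 \<Longrightarrow> cinner x s = 0"
  by (metis cinner_commute complex_cnj_zero)

lemma greedy_aux:
  assumes ext: "\<And>S. onset S \<Longrightarrow> (\<forall>s\<in>S. P s) \<Longrightarrow> \<not> cmpl S \<Longrightarrow>
                  (\<exists>x. cinner x x = 1 \<and> (\<forall>s\<in>S. cinner s x = 0) \<and> P x)"
  shows "onset (S::(complex^'n::finite) set) \<Longrightarrow> (\<forall>s\<in>S. P s) \<Longrightarrow> \<exists>T. S \<subseteq> T \<and> onset T \<and> cmpl T \<and> (\<forall>s\<in>T. P s)"
proof (induction "DIM(complex^'n) - card S" arbitrary: S rule: less_induct)
  case less
  show ?case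
  proof (cases "cmpl S")
    case True then show ?thesis using less.prems by blast
  next
    case False
    then obtain x where x: "cinner x x = 1" "\<forall>s\<in>S. cinner s x = 0" "P x"
      using ext less.prems by blast
    have xS: "x \<notin> S" using x by force
    have fin: "finite S" using less.prems unfolding onset_def by simp
    have on: "onset (insert x S)"
      using less.prems x fin cinner_zero_sym unfolding onset_def
      by (auto)
    have "card (insert x S) \<le> DIM(complex^'n)" by (rule onset_card[OF on])
    then have "DIM(complex^'n) - card (insert x S) < DIM(complex^'n) - card S"
      using xS fin by simp
    then obtain T where "insert x S \<subseteq> T \<and> onset T \<and> cmpl T \<and> (\<forall>s\<in>T. P s)"
      using less.hyps[OF _ on] less.prems x by auto
    then show ?thesis by blast
  qed
qed

lemma greedy:
  assumes ext: "\<And>S. onset S \<Longrightarrow> (\<forall>s\<in>S. P s) \<Longrightarrow> \<not> cmpl S \<Longrightarrow>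
                  (\<exists>x. cinner x x = 1 \<and> (\<forall>s\<in>S. cinner s x = 0) \<and> P x)"
  shows "\<exists>T::(complex^'n::finite) set. onset T \<and> cmpl T \<and> (\<forall>s\<in>T. P s)"
  using greedy_aux[OF ext, of "{}"] by (auto simp: onset_def)

lemma spec2:
  fixes H1 H2 :: "'n::finite cmat"
  assumes h1: "herm H1" and h2: "herm H2" and comm: "H1 ** H2 = H2 ** H1"
  shows "\<exists>S. onset S \<and> cmpl S \<and> (\<forall>s\<in>S. H1 *v s = cinner s (H1 *v s) *s s
                                        \<and> H2 *v s = cinner s (H2 *v s) *s s)"
proof (rule greedy)
  fix S :: "(complex^'n) set"
  assume on: "onset S" and eig: "\<forall>s\<in>S. H1 *v s = cinner s (H1 *v s) *s s
                                        \<and> H2 *v s = cinner s (H2 *v s) *s s"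
    and nc: "\<not> cmpl S"
  define V where "V = {y. \<forall>s\<in>S. cinner s y = 0}"
  obtain y0 where y0: "y0 \<in> V" "y0 \<noteq> 0" using nc unfolding cmpl_def V_def by blast
  have inv1: "H1 *v y \<in> V" if "y \<in> V" for y
  proof -
    have "cinner s (H1 *v y) = 0" if "s \<in> S" for s
    proof -
      have "cinner s (H1 *v y) = cinner (H1 *v s) y" by (rule herm_sym[OF h1])
      also have "\<dots> = cinner (cinner s (H1 *v s) *s s) y" using eig that by metis
      also have "\<dots> = 0" using that \<open>y \<in> V\<close> by (simp add: cinner_scale_left V_def)
      finally show ?thesis .
    qed
    then show ?thesis by (simp add: V_def)
  qed
  have inv2: "H2 *v y \<in> V" if "y \<in> V" for y
  proof -
    have "cinner s (H2 *v y) = 0" if "s \<in> S" for s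
    proof -
      have "cinner s (H2 *v y) = cinner (H2 *v s) y" by (rule herm_sym[OF h2])
      also have "\<dots> = cinner (cinner s (H2 *v s) *s s) y" using eig that by metis
      also have "\<dots> = 0" using that \<open>y \<in> V\<close> by (simp add: cinner_scale_left V_def)
      finally show ?thesis .
    qed
    then show ?thesis by (simp add: V_def)
  qed
  obtain x1 where x1: "x1 \<in> V" "norm x1 = 1" "H1 *v x1 = cinner x1 (H1 *v x1) *s x1"
  proof -
    have "0 \<in> V" by (simp add: V_def)
    moreover have "\<And>a b. a \<in> V \<Longrightarrow> b \<in> V \<Longrightarrow> a + b \<in> V" by (simp add: V_def cinner_add_right)
    moreover have "\<And>c a. a \<in> V \<Longrightarrow> c *s a \<in> V" by (simp add: V_def cinner_scale_right)
    ultimately show ?thesis using eig_sub[OF h1, of V y0] y0 inv1 that by blast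
  qed
  define lam where "lam = cinner x1 (H1 *v x1)"
  define V' where "V' = {y \<in> V. H1 *v y = lam *s y}"
  have x1V': "x1 \<in> V'" using x1 by (simp add: V'_def lam_def)
  have x1ne: "x1 \<noteq> 0" using x1 by auto
  have inv2': "H2 *v y \<in> V'" if "y \<in> V'" for y
  proof -
    have "H1 *v (H2 *v y) = H2 *v (H1 *v y)" by (simp add: matrix_vector_mul_assoc comm)
    also have "\<dots> = lam *s (H2 *v y)" using that by (simp add: V'_def mv_scale)
    finally show ?thesis using that inv2 by (simp add: V'_def)
  qed
  have V'0: "0 \<in> V'" by (simp add: V'_def V_def)
  have V'add: "a + b \<in> V'" if "a \<in> V'" "b \<in> V'" for a b
    using that by (simp add: V'_def V_def cinner_add_right mv_add vector_add_ldistrib)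
  have V'scale: "c *s a \<in> V'" if "a \<in> V'" for c a
  proof -
    have "H1 *v (c *s a) = lam *s (c *s a)" using that
      by (simp add: V'_def mv_scale vector_smult_assoc mult.commute)
    then show ?thesis using that by (simp add: V'_def V_def cinner_scale_right)
  qed
  obtain x where x: "x \<in> V'" "norm x = 1" "H2 *v x = cinner x (H2 *v x) *s x"
    using eig_sub[OF h2 V'0 V'add V'scale inv2' x1V' x1ne] by blast
  have xx: "cinner x x = 1" using x(2) by (simp add: cinner_self)
  have "H1 *v x = lam *s x" using x by (simp add: V'_def)
  moreover have "cinner x (H1 *v x) = lam" using calculation xx by (simp add: cinner_scale_right)
  ultimately show "\<exists>x. cinner x x = 1 \<and> (\<forall>s\<in>S. cinner s x = 0) \<and>
            (H1 *v x = cinner x (H1 *v x) *s x \<and> H2 *v x = cinner x (H2 *v x) *s x)"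
    using x xx by (auto simp: V'_def V_def)
qed

lemma mat_eq_on_basis:
  assumes "onset T" "cmpl T" "\<And>s. s \<in> T \<Longrightarrow> P *v s = Q *v s"
  shows "P = Q"
proof (rule cmat_eqI)
  fix x
  have "P *v x = P *v (\<Sum>s\<in>T. cinner s x *s s)" using onset_expand[OF assms(1,2), of x, symmetric] by simp
  also have "\<dots> = (\<Sum>s\<in>T. cinner s x *s (P *v s))" by (simp add: mv_sum_right mv_scale)
  also have "\<dots> = (\<Sum>s\<in>T. cinner s x *s (Q *v s))" using assms(3) by simp
  also have "\<dots> = Q *v (\<Sum>s\<in>T. cinner s x *s s)" by (simp add: mv_sum_right mv_scale)
  also have "\<dots> = Q *v x" using onset_expand[OF assms(1,2), of x, symmetric] by simp
  finally show "P *v x = Q *v x" .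
qed

lemma herm_cadj_mult: "herm (cadj A ** A)"
  by (simp add: herm_def cadj_mult)

lemma cinner_adj2: "cinner x (cadj A *v y) = cinner (A *v x) y"
  using cinner_adj[of x "cadj A" y] by simp

lemma sum_outer_v: "(\<Sum>s\<in>T. smat (c s) (outer s s)) *v x = (\<Sum>s\<in>T. (c s * cinner s x) *s s)"
  by (simp add: msum_v smat_v outer_mv vector_smult_assoc)

lemma onset_mv_basis:
  assumes "onset T" "t \<in> T"
  shows "(\<Sum>s\<in>T. smat (c s) (outer s s)) *v t = c t *s t"
proof -
  have "(\<Sum>s\<in>T. (c s * cinner s t) *s s) = (\<Sum>s\<in>T. if s = t then c t *s t else 0)"
    using onset_delta[OF assms(1) _ assms(2)] by (intro sum.cong) auto
  also have "\<dots> = c t *s t" using assms unfolding onset_def by simp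
  finally show ?thesis by (simp add: sum_outer_v)
qed

lemma cinner_neg_right: "cinner x (- y) = - cinner x y"
  by (simp add: cinner_def sum_negf)

lemma psd_unique:
  assumes psdB: "psd B" and sq: "B ** B = M" and s: "M *v s = complex_of_real (sig^2) *s s"
    and sig: "sig \<ge> 0"
  shows "B *v s = complex_of_real sig *s s"
proof -
  have hB: "herm B" using psdB by (simp add: psd_def herm_def)
  define w where "w = B *v s - complex_of_real sig *s s"
  have Bw: "B *v w = - (complex_of_real sig *s w)"
  proof -
    have "B *v w = M *v s - complex_of_real sig *s (B *v s)"
      by (simp add: w_def mv_diff mv_scale matrix_vector_mul_assoc sq)
    also have "\<dots> = - (complex_of_real sig *s w)"
      unfolding s w_def by (simp add: vec_eq_iff vector_scalar_mult_def algebra_simps power2_eq_square)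
    finally show ?thesis .
  qed
  have "w = 0"
  proof (cases "sig = 0")
    case True
    then have Bw0: "B *v w = 0" using Bw by (simp add: vec_eq_iff vector_scalar_mult_def)
    have "cinner w w = cinner (B *v s) w" using True by (simp add: w_def)
    also have "\<dots> = cinner s (B *v w)" using herm_sym[OF hB] by simp
    also have "\<dots> = 0" using Bw0 by simp
    finally show ?thesis by simp
  next
    case False
    have "0 \<le> Re (cinner w (B *v w))" using psdB by (simp add: psd_def)
    also have "Re (cinner w (B *v w)) = - sig * (norm w)^2"
      by (simp add: Bw cinner_self cinner_scale_right cinner_neg_right)
    finally have "(norm w)^2 \<le> 0" using False sig
      by (simp add: mult_le_0_iff zero_le_mult_iff)
    then show ?thesis by simp
  qed
  then show ?thesis by (simp add: w_def)
qed

lemma trace_smat: "trace (smat c M) = c * trace M"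
  by (simp add: trace_def smat_def sum_distrib_left)

lemma cinner_M: "cinner s ((cadj A ** A) *v s) = complex_of_real ((norm (A *v s))^2)"
proof -
  have "cinner s ((cadj A ** A) *v s) = cinner s (cadj A *v (A *v s))"
    by (simp add: matrix_vector_mul_assoc)
  also have "\<dots> = cinner (A *v s) (A *v s)" by (rule cinner_adj2)
  finally show ?thesis by (simp add: cinner_self)
qed

lemma quad_form_sum:
  "Re (cinner x ((\<Sum>s\<in>T. smat (complex_of_real (c s)) (outer s s)) *v x))
     = (\<Sum>s\<in>T. c s * (cmod (cinner s x))^2)"
proof -
  have "cinner x ((\<Sum>s\<in>T. smat (complex_of_real (c s)) (outer s s)) *v x)
        = (\<Sum>s\<in>T. complex_of_real (c s) * cinner s x * cinner x s)"
    by (simp add: sum_outer_v cinner_sum_right cinner_scale_right)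
  also have "\<dots> = (\<Sum>s\<in>T. complex_of_real (c s * (cmod (cinner s x))^2))"
  proof (intro sum.cong refl)
    fix s
    have "cinner s x * cinner x s = complex_of_real ((cmod (cinner s x))^2)"
      using cinner_commute[of x s] complex_norm_square[of "cinner s x"] by metis
    then show "complex_of_real (c s) * cinner s x * cinner x s = complex_of_real (c s * (cmod (cinner s x))^2)"
      by (simp add: mult.assoc)
  qed
  finally show ?thesis by (simp only: Re_sum Re_complex_of_real)
qed

lemma mabs_props:
  fixes A :: "'n::finite cmat"
  shows "\<exists>T. onset T \<and> cmpl T
     \<and> mabs A = (\<Sum>s\<in>T. smat (complex_of_real (norm (A *v s))) (outer s s))
     \<and> (\<forall>s\<in>T. mabs A *v s = complex_of_real (norm (A *v s)) *s s)
     \<and> psd (mabs A)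
     \<and> (\<forall>s\<in>T. \<forall>t\<in>T. s \<noteq> t \<longrightarrow> cinner (A *v s) (A *v t) = 0)
     \<and> trnorm A = (\<Sum>s\<in>T. norm (A *v s))"
proof -
  define M where "M = cadj A ** A"
  have hM: "herm M" unfolding M_def by (rule herm_cadj_mult)
  obtain T where on: "onset T" and cm: "cmpl T"
    and eig: "\<forall>s\<in>T. M *v s = cinner s (M *v s) *s s"
    using spec2[OF hM hM refl] by blast
  define sig where "sig = (\<lambda>s. norm (A *v s))"
  have Ms: "M *v s = complex_of_real ((sig s)^2) *s s" if "s \<in> T" for s
  proof -
    have "M *v s = cinner s (M *v s) *s s" using eig that by blast
    also have "cinner s (M *v s) = complex_of_real ((sig s)^2)"
      unfolding M_def sig_def by (rule cinner_M)
    finally show ?thesis .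
  qed
  define B where "B = (\<Sum>s\<in>T. smat (complex_of_real (sig s)) (outer s s))"
  have Bs: "B *v s = complex_of_real (sig s) *s s" if "s \<in> T" for s
    unfolding B_def by (rule onset_mv_basis[OF on that])
  have psdB: "psd B"
  proof -
    have "cadj B = B" unfolding B_def
      by (simp add: cadj_sum cadj_smat cadj_outer)
    moreover have "0 \<le> Re (cinner x (B *v x))" for x
      unfolding B_def quad_form_sum by (intro sum_nonneg) (simp add: sig_def)
    ultimately show ?thesis by (simp add: psd_def)
  qed
  have BB: "B ** B = M"
  proof (rule mat_eq_on_basis[OF on cm])
    fix s assume "s \<in> T"
    then show "(B ** B) *v s = M *v s"
      by (simp add: matrix_vector_mul_assoc[symmetric] Bs mv_scale Ms vector_smult_assoc power2_eq_square)
  qed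
  have uniq: "B' = B" if "psd B' \<and> B' ** B' = cadj A ** A" for B'
  proof (rule mat_eq_on_basis[OF on cm])
    fix s assume sT: "s \<in> T"
    show "B' *v s = B *v s"
    proof -
      have "B' *v s = complex_of_real (sig s) *s s"
      proof (rule psd_unique[of B' M s "sig s"])
        show "psd B'" using that by blast
        show "B' ** B' = M" using that by (simp add: M_def)
        show "M *v s = complex_of_real ((sig s)\<^sup>2) *s s" by (rule Ms[OF sT])
        show "0 \<le> sig s" by (simp add: sig_def)
      qed
      then show ?thesis using Bs[OF sT] by simp
    qed
  qed
  have mabs: "mabs A = B" unfolding mabs_def
  proof (rule the_equality)
    show "psd B \<and> B ** B = cadj A ** A" using psdB BB by (simp add: M_def)
    show "\<And>x. psd x \<and> x ** x = cadj A ** A \<Longrightarrow> x = B" by (rule uniq)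
  qed
  have orth: "cinner (A *v s) (A *v t) = 0" if "s \<in> T" "t \<in> T" "s \<noteq> t" for s t
  proof -
    have "cinner (A *v s) (A *v t) = cinner s (M *v t)"
      by (simp add: M_def matrix_vector_mul_assoc[symmetric] cinner_adj2)
    also have "\<dots> = 0" using Ms[OF that(2)] onset_delta[OF on that(1,2)] that(3)
      by (simp add: cinner_scale_right)
    finally show ?thesis .
  qed
  have "trace B = (\<Sum>s\<in>T. complex_of_real (sig s))"
    unfolding B_def using on
    by (simp add: trace_sum trace_smat trace_outer onset_def)
  then have "trnorm A = (\<Sum>s\<in>T. sig s)" by (simp add: trnorm_def mabs Re_sum)
  then have tr: "trnorm A = (\<Sum>s\<in>T. norm (A *v s))" by (simp add: sig_def)
  show ?thesis
  proof (intro exI[of _ T] conjI)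
    show "onset T" "cmpl T" by (fact on) (fact cm)
    show "mabs A = (\<Sum>s\<in>T. smat (complex_of_real (norm (A *v s))) (outer s s))"
      using mabs by (simp add: B_def sig_def)
    show "\<forall>s\<in>T. mabs A *v s = complex_of_real (norm (A *v s)) *s s"
      using Bs mabs by (simp add: sig_def)
    show "psd (mabs A)" using psdB mabs by simp
    show "\<forall>s\<in>T. \<forall>t\<in>T. s \<noteq> t \<longrightarrow> cinner (A *v s) (A *v t) = 0" using orth by blast
    show "trnorm A = (\<Sum>s\<in>T. norm (A *v s))" by (fact tr)
  qed
qed

definition adm :: "nat \<Rightarrow> (nat \<Rightarrow> 'n::finite cmat) \<Rightarrow> bool" where
  "adm k C \<longleftrightarrow> (\<Sum>i<k. cadj (C i) ** C i) = mat 1"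

lemma mmult_sum_right: "A ** sum f S = (\<Sum>i\<in>S. A ** (f i :: 'n::finite cmat))"
  by (induction S rule: infinite_finite_induct) (auto simp: matrix_add_ldistrib)

lemma matrix_add_rdistrib': "((B + C) ** A) = (B ** A) + (C ** (A::'a::semiring_1^'p^'m))"
  by (simp add: matrix_matrix_mult_def vec_eq_iff distrib_right sum.distrib)

lemma cinner_one_norm: "cinner s s = 1 \<Longrightarrow> norm s = 1"
proof -
  assume "cinner s s = 1"
  then have "(norm s)^2 = 1" using norm_sq_cinner[of s] by simp
  then show "norm s = 1" by (simp add: power2_eq_1_iff) (smt (verit) norm_ge_zero)
qed

lemma mmult_sum_left: "sum f S ** A = (\<Sum>i\<in>S. (f i :: 'n::finite cmat) ** A)"
  by (induction S rule: infinite_finite_induct) (auto simp: matrix_add_rdistrib')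

lemma opnorm_sum: "opnorm (sum f S) \<le> (\<Sum>i\<in>S. opnorm (f i :: 'n::finite cmat))"
proof (induction S rule: infinite_finite_induct)
  case (insert x F)
  then show ?case using opnorm_add[of "f x" "sum f F"] by simp
qed auto

lemma sum_norm_sq:
  assumes "adm k C" shows "(\<Sum>i<k. (norm (C i *v x))\<^sup>2) = (norm x)\<^sup>2"
proof -
  have "(\<Sum>i<k. (norm (C i *v x))\<^sup>2) = Re (\<Sum>i<k. cinner x ((cadj (C i) ** C i) *v x))"
    by (simp add: Re_sum norm_sq_cinner matrix_vector_mul_assoc[symmetric] cinner_adj2)
  also have "\<dots> = Re (cinner x ((\<Sum>i<k. cadj (C i) ** C i) *v x))"
    by (simp add: msum_v cinner_sum_right)
  also have "\<dots> = (norm x)\<^sup>2" using assms by (simp add: adm_def norm_sq_cinner)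
  finally show ?thesis .
qed

lemma L2_norm_C:
  assumes "adm k C" shows "L2_set (\<lambda>i. norm (C i *v x)) {..<k} = norm x"
  unfolding L2_set_def using sum_norm_sq[OF assms, of x] by simp

lemma A_expand:
  assumes "onset T" "cmpl T"
  shows "A = (\<Sum>s\<in>T. outer (A *v s) s)"
proof -
  have "A = A ** mat 1" by simp
  also have "\<dots> = A ** (\<Sum>s\<in>T. outer s s)" using onset_sum_outer[OF assms] by simp
  also have "\<dots> = (\<Sum>s\<in>T. outer (A *v s) s)" by (simp add: mmult_sum_right mult_outer)
  finally show ?thesis .
qed

lemma CAC_expand:
  assumes "onset T" "cmpl T"
  shows "C ** A ** cadj C = (\<Sum>s\<in>T. outer (C *v (A *v s)) (C *v s))"
proof -
  have "C ** A ** cadj C = C ** (\<Sum>s\<in>T. outer (A *v s) s) ** cadj C"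
    using A_expand[OF assms, of A] by simp
  also have "\<dots> = (\<Sum>s\<in>T. outer (C *v (A *v s)) (C *v s))"
    by (simp add: mmult_sum_right mmult_sum_left mult_outer outer_mult)
  finally show ?thesis .
qed

lemma upper:
  fixes A :: "'n::finite cmat"
  assumes "adm k C"
  shows "(\<Sum>i<k. opnorm (C i ** A ** cadj (C i))) \<le> trnorm A"
proof -
  obtain T where on: "onset T" and cm: "cmpl T" and tr: "trnorm A = (\<Sum>s\<in>T. norm (A *v s))"
    using mabs_props[of A] by blast
  have "(\<Sum>i<k. opnorm (C i ** A ** cadj (C i)))
        \<le> (\<Sum>i<k. \<Sum>s\<in>T. norm (C i *v (A *v s)) * norm (C i *v s))"
  proof (intro sum_mono)
    fix i
    have "opnorm (C i ** A ** cadj (C i)) \<le> (\<Sum>s\<in>T. opnorm (outer (C i *v (A *v s)) (C i *v s)))"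
      unfolding CAC_expand[OF on cm] by (rule opnorm_sum)
    also have "\<dots> \<le> (\<Sum>s\<in>T. norm (C i *v (A *v s)) * norm (C i *v s))"
      by (intro sum_mono opnorm_outer_le)
    finally show "opnorm (C i ** A ** cadj (C i)) \<le> (\<Sum>s\<in>T. norm (C i *v (A *v s)) * norm (C i *v s))" .
  qed
  also have "\<dots> = (\<Sum>s\<in>T. \<Sum>i<k. \<bar>norm (C i *v (A *v s))\<bar> * \<bar>norm (C i *v s)\<bar>)"
    by (simp add: sum.swap[of _ "{..<k}"])
  also have "\<dots> \<le> (\<Sum>s\<in>T. L2_set (\<lambda>i. norm (C i *v (A *v s))) {..<k} * L2_set (\<lambda>i. norm (C i *v s)) {..<k})"
    by (intro sum_mono L2_set_mult_ineq)
  also have "\<dots> = (\<Sum>s\<in>T. norm (A *v s) * norm s)"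
    by (simp add: L2_norm_C[OF assms])
  also have "\<dots> = (\<Sum>s\<in>T. norm (A *v s))"
  proof (intro sum.cong refl)
    fix s assume "s \<in> T"
    then have "cinner s s = 1" using on by (simp add: onset_def)
    then have "norm s = 1" by (rule cinner_one_norm)
    then show "norm (A *v s) * norm s = norm (A *v s)" by simp
  qed
  finally show ?thesis using tr by simp
qed

lemma card_onb: fixes S :: "(complex^'n::finite) set"
  assumes "onset S" "cmpl S" shows "card S = CARD('n)"
proof -
  have "trace (\<Sum>s\<in>S. outer s s) = (\<Sum>s\<in>S. (1::complex))"
    using assms(1) by (simp add: trace_sum trace_outer onset_def)
  then have "of_nat (card S) = (of_nat CARD('n) :: complex)"
    using onset_sum_outer[OF assms] by (simp add: trace_I)
  then show ?thesis using of_nat_eq_iff by blast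
qed

lemma normalize_unit: "y \<noteq> 0 \<Longrightarrow>
   cinner (complex_of_real (1 / norm y) *s y) (complex_of_real (1 / norm y) *s y) = 1"
  by (simp add: cinner_self norm_scale norm_divide)

lemma extend_onb: fixes S :: "(complex^'n::finite) set"
  assumes "onset S" shows "\<exists>R. S \<subseteq> R \<and> onset R \<and> cmpl R"
proof -
  have "\<exists>T. S \<subseteq> T \<and> onset T \<and> cmpl T \<and> (\<forall>s\<in>T. True)"
  proof (rule greedy_aux[OF _ assms])
    fix S :: "(complex^'n) set" assume "\<not> cmpl S"
    then obtain y where y: "\<forall>x\<in>S. cinner x y = 0" "y \<noteq> 0" unfolding cmpl_def by blast
    define x where "x = complex_of_real (1 / norm y) *s y"
    have "cinner x x = 1" using y(2) unfolding x_def by (rule normalize_unit)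
    moreover have "\<forall>s\<in>S. cinner s x = 0" using y by (simp add: x_def cinner_scale_right)
    ultimately show "\<exists>x. cinner x x = 1 \<and> (\<forall>s\<in>S. cinner s x = 0) \<and> True" by blast
  qed simp
  then show ?thesis by blast
qed

lemma outer_sum_mv_delta:
  assumes "onset T" "t \<in> T"
  shows "(\<Sum>s\<in>T. outer (f s) s) *v t = f t"
proof -
  have "(\<Sum>s\<in>T. outer (f s) s) *v t = (\<Sum>s\<in>T. cinner s t *s f s)" by (simp add: msum_v outer_mv)
  also have "\<dots> = (\<Sum>s\<in>T. if s = t then f t else 0)"
    using onset_delta[OF assms(1) _ assms(2)] by (intro sum.cong) auto
  also have "\<dots> = f t" using assms unfolding onset_def by simp
  finally show ?thesis .
qed

lemma polar:
  fixes A :: "'n::finite cmat"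
  shows "\<exists>U. cadj U ** U = mat 1 \<and> U ** cadj U = mat 1 \<and> U ** mabs A = A"
proof -
  obtain T where on: "onset T" and cm: "cmpl T"
    and Bs: "\<forall>s\<in>T. mabs A *v s = complex_of_real (norm (A *v s)) *s s"
    and orth: "\<forall>s\<in>T. \<forall>t\<in>T. s \<noteq> t \<longrightarrow> cinner (A *v s) (A *v t) = 0"
    using mabs_props[of A] by blast
  have finT: "finite T" using on by (simp add: onset_def)
  define T1 where "T1 = {s\<in>T. A *v s \<noteq> 0}"
  define u where "u = (\<lambda>s. complex_of_real (1 / norm (A *v s)) *s (A *v s))"
  have uu: "cinner (u s) (u t) = (if s = t then 1 else 0)" if "s \<in> T1" "t \<in> T1" for s t
  proof (cases "s = t")
    case True
    then show ?thesis using that normalize_unit[of "A *v s"]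
      by (simp add: T1_def u_def)
  next
    case False
    then show ?thesis using that orth
      by (simp add: T1_def u_def cinner_scale_left cinner_scale_right)
  qed
  have injU: "inj_on u T1"
  proof (rule inj_onI)
    fix s t assume "s \<in> T1" "t \<in> T1" "u s = u t"
    then show "s = t" using uu[of s t] uu[of t t] by (metis zero_neq_one)
  qed
  define R1 where "R1 = u ` T1"
  have onR1: "onset R1"
    unfolding onset_def R1_def using finT uu injU
    by (auto simp: T1_def inj_on_eq_iff)
  obtain R where RR: "R1 \<subseteq> R" and onR: "onset R" and cmR: "cmpl R"
    using extend_onb[OF onR1] by blast
  have finR: "finite R" using onR by (simp add: onset_def)
  have cR: "card R = card T" using card_onb[OF onR cmR] card_onb[OF on cm] by simp
  have cR1: "card R1 = card T1" unfolding R1_def by (rule card_image[OF injU])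
  have T1T: "T1 \<subseteq> T" by (auto simp: T1_def)
  have "card (R - R1) = card (T - T1)"
    using cR cR1 RR T1T finR finT by (simp add: card_Diff_subset finite_subset)
  then obtain g where g: "bij_betw g (T - T1) (R - R1)"
    using finite_same_card_bij[of "T - T1" "R - R1"] finR finT by (metis finite_Diff)
  define f where "f = (\<lambda>s. if s \<in> T1 then u s else g s)"
  have bu: "bij_betw u T1 R1" unfolding R1_def by (rule inj_on_imp_bij_betw[OF injU])
  have "bij_betw f (T1 \<union> (T - T1)) (R1 \<union> (R - R1))"
    unfolding f_def by (rule bij_betw_disjoint_Un[OF bu g]) auto
  then have bf: "bij_betw f T R" using T1T RR by (simp add: Un_absorb1 Un_Diff_cancel)
  define U where "U = (\<Sum>s\<in>T. outer (f s) s)"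
  have Ut: "U *v t = f t" if "t \<in> T" for t
    unfolding U_def by (rule outer_sum_mv_delta[OF on that])
  have fR: "f t \<in> R" if "t \<in> T" for t using bf that by (auto simp: bij_betw_def)
  have ff: "cinner (f s) (f t) = (if t = s then 1 else 0)" if "s \<in> T" "t \<in> T" for s t
  proof -
    have "f s = f t \<longleftrightarrow> s = t" using bf that by (auto simp: bij_betw_def inj_on_eq_iff)
    then show ?thesis using onset_delta[OF onR fR[OF that(1)] fR[OF that(2)]] by auto
  qed
  have cU: "cadj U = (\<Sum>s\<in>T. outer s (f s))" unfolding U_def by (simp add: cadj_sum cadj_outer)
  have cUf: "cadj U *v f t = t" if "t \<in> T" for t
  proof -
    have "cadj U *v f t = (\<Sum>s\<in>T. cinner (f s) (f t) *s s)" by (simp add: cU msum_v outer_mv)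
    also have "\<dots> = (\<Sum>s\<in>T. if s = t then t else 0)"
      using ff[OF _ that] by (intro sum.cong) auto
    also have "\<dots> = t" using that finT by simp
    finally show ?thesis .
  qed
  have u1: "cadj U ** U = mat 1"
    by (rule mat_eq_on_basis[OF on cm]) (simp add: matrix_vector_mul_assoc[symmetric] Ut cUf)
  have u2: "U ** cadj U = mat 1"
  proof (rule mat_eq_on_basis[OF onR cmR])
    fix r assume "r \<in> R"
    then obtain t where t: "t \<in> T" "r = f t" using bf by (auto simp: bij_betw_def)
    then show "(U ** cadj U) *v r = mat 1 *v r"
      by (simp add: matrix_vector_mul_assoc[symmetric] Ut cUf)
  qed
  have u3: "U ** mabs A = A"
  proof (rule mat_eq_on_basis[OF on cm])
    fix t assume t: "t \<in> T"
    have "(U ** mabs A) *v t = complex_of_real (norm (A *v t)) *s f t"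
      using Bs t by (simp add: matrix_vector_mul_assoc[symmetric] mv_scale Ut)
    also have "\<dots> = A *v t"
    proof (cases "A *v t = 0")
      case True then show ?thesis by simp
    next
      case False
      then have "t \<in> T1" using t by (simp add: T1_def)
      then show ?thesis using False
        by (simp add: f_def u_def vector_smult_assoc)
    qed
    finally show "(U ** mabs A) *v t = A *v t" .
  qed
  show ?thesis using u1 u2 u3 by blast
qed

lemma outer_outer: "outer u v ** outer w z = smat (cinner v w) (outer u z)"
  by (simp add: outer_def smat_def matrix_matrix_mult_def cinner_def vec_eq_iff sum_distrib_left
      sum_distrib_right mult_ac)

lemma mdiff_v: "(P - Q) *v x = P *v x - Q *v (x::complex^'n::finite)"
  by (simp add: matrix_vector_mult_def vec_eq_iff sum_subtractf left_diff_distrib)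

lemma cplx_solve: assumes "p + q = A" "\<i> * (p - q) = B" shows "p = (A - \<i> * B) / 2"
proof -
  have "\<i> * B = \<i> * (\<i> * (p - q))" using assms(2) by simp
  then have iB: "\<i> * B = q - p" by simp
  have "A - \<i> * B = 2 * p" unfolding iB assms(1)[symmetric] by simp
  then show ?thesis by simp
qed

lemma unitary_eig:
  fixes W :: "'n::finite cmat"
  assumes u1: "cadj W ** W = mat 1" and u2: "W ** cadj W = mat 1"
  shows "\<exists>X. onset X \<and> cmpl X \<and> (\<forall>x\<in>X. \<exists>c. W *v x = c *s x \<and> cmod c = 1)"
proof -
  define H1 where "H1 = W + cadj W"
  define H2 where "H2 = smat \<i> (W - cadj W)"
  have h1: "herm H1" unfolding H1_def herm_def by (simp add: cadj_add add.commute)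
  have h2: "herm H2" unfolding H2_def herm_def
    by (simp add: cadj_def smat_def vec_eq_iff algebra_simps)
  have H1v: "H1 *v y = W *v y + cadj W *v y" for y by (simp add: H1_def madd_v)
  have H2v: "H2 *v y = \<i> *s (W *v y - cadj W *v y)" for y by (simp add: H2_def smat_v mdiff_v)
  have WQ: "W *v (cadj W *v y) = y" for y by (simp add: matrix_vector_mul_assoc u2)
  have QW: "cadj W *v (W *v y) = y" for y by (simp add: matrix_vector_mul_assoc u1)
  have comm: "H1 ** H2 = H2 ** H1"
  proof (rule cmat_eqI)
    fix x
    have "(H1 ** H2) *v x = \<i> *s (W *v (W *v x) - x) + \<i> *s (x - cadj W *v (cadj W *v x))"
      by (simp add: matrix_vector_mul_assoc[symmetric] H1v H2v mv_scale mv_diff WQ QW)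
    also have "\<dots> = \<i> *s (W *v (W *v x) + x - x - cadj W *v (cadj W *v x))"
      by (simp add: vec_eq_iff vector_scalar_mult_def algebra_simps)
    also have "\<dots> = (H2 ** H1) *v x"
      by (simp add: matrix_vector_mul_assoc[symmetric] H1v H2v mv_add WQ QW algebra_simps)
    finally show "(H1 ** H2) *v x = (H2 ** H1) *v x" .
  qed
  obtain X where on: "onset X" and cm: "cmpl X"
    and eig: "\<forall>s\<in>X. H1 *v s = cinner s (H1 *v s) *s s \<and> H2 *v s = cinner s (H2 *v s) *s s"
    using spec2[OF h1 h2 comm] by blast
  have "\<exists>c. W *v x = c *s x \<and> cmod c = 1" if xX: "x \<in> X" for x
  proof -
    define a where "a = cinner x (H1 *v x)"
    define b where "b = cinner x (H2 *v x)"
    from eig xX have e1: "H1 *v x = a *s x" unfolding a_def by blast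
    from eig xX have e2: "H2 *v x = b *s x" unfolding b_def by blast
    have ea: "W *v x + cadj W *v x = a *s x" using e1 H1v[of x] by simp
    have eb: "\<i> *s (W *v x - cadj W *v x) = b *s x" using e2 H2v[of x] by simp
    define c where "c = (a - \<i> * b) / 2"
    have Wx: "W *v x = c *s x"
    proof -
      have "(W *v x) $ j = c * x $ j" for j
      proof -
        have "(W *v x) $ j + (cadj W *v x) $ j = a * x $ j"
          using arg_cong[OF ea, of "\<lambda>v. v $ j"] by (simp add: vector_scalar_mult_def)
        moreover have "\<i> * ((W *v x) $ j - (cadj W *v x) $ j) = b * x $ j"
          using arg_cong[OF eb, of "\<lambda>v. v $ j"] by (simp add: vector_scalar_mult_def)
        ultimately have "(W *v x) $ j = (a * x $ j - \<i> * (b * x $ j)) / 2" by (rule cplx_solve)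
        then show ?thesis by (simp add: c_def field_simps)
      qed
      then show ?thesis by (simp add: vec_eq_iff vector_scalar_mult_def)
    qed
    have xx: "cinner x x = 1" using on xX by (simp add: onset_def)
    have "cinner (W *v x) (W *v x) = cinner x x"
      by (simp add: cinner_adj2[symmetric] QW)
    then have "c * cnj c = 1" using xx by (simp add: Wx cinner_scale_left cinner_scale_right)
    then have "complex_of_real ((cmod c)^2) = 1" by (simp only: complex_norm_square)
    then have "(cmod c)^2 = 1" using of_real_eq_1_iff by blast
    then have "cmod c = 1" by (simp add: power2_eq_1_iff) (smt (verit) norm_ge_zero)
    then show ?thesis using Wx by blast
  qed
  then show ?thesis using on cm by blast
qed

lemma smat_one: "smat 1 M = M"
  by (simp add: smat_def vec_eq_iff)

lemma trace_onb: assumes "onset X" "cmpl X"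
  shows "trace B = (\<Sum>x\<in>X. cinner x (B *v x))"
proof -
  have "trace B = trace (B ** (\<Sum>x\<in>X. outer x x))" using onset_sum_outer[OF assms] by simp
  also have "\<dots> = (\<Sum>x\<in>X. cinner x (B *v x))"
    by (simp add: mmult_sum_right mult_outer trace_sum trace_outer)
  finally show ?thesis .
qed

lemma psd_real: assumes "psd B" shows "cmod (cinner x (B *v x)) = Re (cinner x (B *v x))"
proof -
  have "cinner x (B *v x) = cinner (B *v x) x"
    using assms unfolding psd_def by (metis cinner_adj)
  then have "Im (cinner x (B *v x)) = 0" by (metis cinner_commute cnj.simps(2) neg_equal_zero)
  moreover have "Re (cinner x (B *v x)) \<ge> 0" using assms by (simp add: psd_def)
  ultimately show ?thesis by (simp add: cmod_eq_Re)
qed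

lemma attain:
  fixes A :: "'n::finite cmat"
  shows "\<exists>k C. adm k C \<and> (\<Sum>i<k. opnorm (C i ** A ** cadj (C i))) = trnorm A"
proof -
  obtain U where u1: "cadj U ** U = mat 1" and u2: "U ** cadj U = mat 1" and uA: "U ** mabs A = A"
    using polar[of A] by blast
  define B where "B = mabs A"
  have psdB: "psd B" unfolding B_def using mabs_props[of A] by blast
  obtain X where on: "onset X" and cm: "cmpl X"
    and eig: "\<forall>x\<in>X. \<exists>c. cadj U *v x = c *s x \<and> cmod c = 1"
    using unitary_eig[of "cadj U"] u1 u2 by auto
  have val: "cmod (cinner x (A *v x)) = Re (cinner x (B *v x))" if "x \<in> X" for x
  proof -
    from bspec[OF eig that] obtain c where c: "cadj U *v x = c *s x" "cmod c = 1" by (elim exE conjE)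
    have "cinner x (A *v x) = cinner x (U *v (B *v x))"
      using uA by (simp add: B_def matrix_vector_mul_assoc)
    also have "\<dots> = cinner (cadj U *v x) (B *v x)" by (rule cinner_adj)
    also have "\<dots> = cnj c * cinner x (B *v x)" by (simp add: c cinner_scale_left)
    finally have "cmod (cinner x (A *v x)) = cmod (cinner x (B *v x))"
      using c(2) by (simp add: norm_mult)
    then show ?thesis using psd_real[OF psdB] by simp
  qed
  have tr: "trnorm A = (\<Sum>x\<in>X. Re (cinner x (B *v x)))"
    unfolding trnorm_def B_def[symmetric] trace_onb[OF on cm] by (simp add: Re_sum)
  have finX: "finite X" using on by (simp add: onset_def)
  obtain h where h: "bij_betw h {0..<card X} X" using ex_bij_betw_nat_finite[OF finX] by blast
  define e where "e = (axis (undefined::'n) 1 :: complex^'n)"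
  have ee: "cinner e e = 1"
  proof -
    have "cinner e e = (\<Sum>i\<in>UNIV. if i = (undefined::'n) then 1 else 0)"
      unfolding e_def cinner_def axis_def by (intro sum.cong) auto
    then show ?thesis by simp
  qed
  have ne: "norm e = 1" by (rule cinner_one_norm[OF ee])
  define C where "C = (\<lambda>j. outer e (h j))"
  have "adm (card X) C"
  proof -
    have "(\<Sum>j<card X. cadj (C j) ** C j) = (\<Sum>j<card X. outer (h j) (h j))"
      by (simp add: C_def cadj_outer outer_outer ee smat_one)
    also have "\<dots> = (\<Sum>x\<in>X. outer x x)"
      using sum.reindex_bij_betw[OF h, of "\<lambda>x. outer x x"] by (simp add: atLeast0LessThan)
    also have "\<dots> = mat 1" by (rule onset_sum_outer[OF on cm])
    finally show ?thesis by (simp add: adm_def)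
  qed
  moreover have "(\<Sum>j<card X. opnorm (C j ** A ** cadj (C j))) = trnorm A"
  proof -
    have "opnorm (C j ** A ** cadj (C j)) = cmod (cinner (h j) (A *v h j))" for j
    proof -
      have "C j ** A ** cadj (C j) = smat (cinner (h j) (A *v h j)) (outer e e)"
        unfolding C_def cadj_outer outer_mult[of e "h j" A] outer_outer cinner_adj ..
      then show ?thesis using opnorm_rank1[OF ne] by simp
    qed
    then have "(\<Sum>j<card X. opnorm (C j ** A ** cadj (C j)))
               = (\<Sum>j<card X. cmod (cinner (h j) (A *v h j)))" by simp
    also have "\<dots> = (\<Sum>x\<in>X. cmod (cinner x (A *v x)))"
      using sum.reindex_bij_betw[OF h, of "\<lambda>x. cmod (cinner x (A *v x))"]
      by (simp add: atLeast0LessThan)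
    also have "\<dots> = trnorm A" using val tr by simp
    finally show ?thesis .
  qed
  ultimately show ?thesis by blast
qed

lemma opnorm_le_trnorm: "opnorm X \<le> trnorm X"
proof -
  have "adm 1 (\<lambda>_. mat 1 :: 'a::finite cmat)" by (simp add: adm_def)
  from upper[OF this, of X] show ?thesis by simp
qed

lemma trnorm_nonneg: "0 \<le> trnorm X"
  using opnorm_nonneg opnorm_le_trnorm order_trans by blast

lemma trnorm_zero: "trnorm (0 :: 'n::finite cmat) = 0"
proof -
  obtain k C where "adm k C" "(\<Sum>i<k. opnorm (C i ** (0::'n cmat) ** cadj (C i))) = trnorm (0::'n cmat)"
    using attain[of "0::'n cmat"] by blast
  then show ?thesis by simp
qed

lemma CsmatC: "C ** smat c X ** cadj C = smat c (C ** X ** cadj C)"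
  by (simp add: smat_def matrix_matrix_mult_def vec_eq_iff sum_distrib_left sum_distrib_right mult_ac)

lemma trnorm_smat: "trnorm (smat c X) = cmod c * trnorm X"
proof (rule antisym)
  obtain k C where C: "adm k C" "(\<Sum>i<k. opnorm (C i ** smat c X ** cadj (C i))) = trnorm (smat c X)"
    using attain by blast
  have "trnorm (smat c X) = cmod c * (\<Sum>i<k. opnorm (C i ** X ** cadj (C i)))"
    using C(2) by (simp add: CsmatC opnorm_smat sum_distrib_left)
  also have "\<dots> \<le> cmod c * trnorm X" by (intro mult_left_mono upper[OF C(1)]) simp
  finally show "trnorm (smat c X) \<le> cmod c * trnorm X" .
next
  obtain k C where C: "adm k C" "(\<Sum>i<k. opnorm (C i ** X ** cadj (C i))) = trnorm X"
    using attain by blast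
  have "cmod c * trnorm X = (\<Sum>i<k. opnorm (C i ** smat c X ** cadj (C i)))"
    using C(2)[symmetric] by (simp add: CsmatC opnorm_smat sum_distrib_left)
  also have "\<dots> \<le> trnorm (smat c X)" by (rule upper[OF C(1)])
  finally show "cmod c * trnorm X \<le> trnorm (smat c X)" .
qed

lemma trnorm_triangle: "trnorm (X + Y) \<le> trnorm X + trnorm (Y :: 'n::finite cmat)"
proof -
  obtain k C where C: "adm k C" "(\<Sum>i<k. opnorm (C i ** (X + Y) ** cadj (C i))) = trnorm (X + Y)"
    using attain by blast
  have "trnorm (X + Y) \<le> (\<Sum>i<k. opnorm (C i ** X ** cadj (C i)) + opnorm (C i ** Y ** cadj (C i)))"
    unfolding C(2)[symmetric]
    by (intro sum_mono) (simp add: matrix_add_ldistrib matrix_add_rdistrib' opnorm_add)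
  also have "\<dots> \<le> trnorm X + trnorm Y"
    unfolding sum.distrib by (intro add_mono upper[OF C(1)])
  finally show ?thesis .
qed

lemma sum_div_mod:
  fixes k M :: nat shows "(\<Sum>l<k*M. g (l div M) (l mod M)) = (\<Sum>i<k. \<Sum>j<M. (g i j :: real))"
proof (cases "M = 0")
  case True then show ?thesis by simp
next
  case False
  have bij: "bij_betw (\<lambda>l. (l div M, l mod M)) {..<k*M} ({..<k} \<times> {..<M})"
  proof (rule bij_betwI')
    fix x y assume "x \<in> {..<k*M}" "y \<in> {..<k*M}"
    show "((x div M, x mod M) = (y div M, y mod M)) = (x = y)"
      by (metis Pair_inject div_mult_mod_eq)
  next
    fix x assume "x \<in> {..<k*M}"
    then show "(x div M, x mod M) \<in> {..<k} \<times> {..<M}" using False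
      by (auto simp: less_mult_imp_div_less mult.commute)
  next
    fix p assume "p \<in> {..<k} \<times> {..<M}"
    then obtain i j where p: "p = (i,j)" "i < k" "j < M" by auto
    have "i * M + j < k * M"
    proof -
      have "i * M + j < i * M + M" using p by simp
      also have "\<dots> = Suc i * M" by simp
      also have "\<dots> \<le> k * M" using p by (intro mult_right_mono) auto
      finally show ?thesis .
    qed
    moreover have "((i * M + j) div M, (i * M + j) mod M) = (i, j)" using p False by simp
    ultimately show "\<exists>x\<in>{..<k*M}. p = (x div M, x mod M)" using p by (metis lessThan_iff)
  qed
  have "(\<Sum>l<k*M. g (l div M) (l mod M)) = (\<Sum>p\<in>{..<k} \<times> {..<M}. g (fst p) (snd p))"
    using sum.reindex_bij_betw[OF bij, of "\<lambda>p. g (fst p) (snd p)"] by simp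
  also have "\<dots> = (\<Sum>i<k. \<Sum>j<M. g i j)" by (simp add: sum.cartesian_product case_prod_beta)
  finally show ?thesis .
qed

lemma sum_div_mod_mat:
  fixes k M :: nat shows "(\<Sum>l<k*M. g (l div M) (l mod M)) = (\<Sum>i<k. \<Sum>j<M. (g i j :: 'n::finite cmat))"
proof (cases "M = 0")
  case True then show ?thesis by simp
next
  case False
  have bij: "bij_betw (\<lambda>l. (l div M, l mod M)) {..<k*M} ({..<k} \<times> {..<M})"
  proof (rule bij_betwI')
    fix x y assume "x \<in> {..<k*M}" "y \<in> {..<k*M}"
    show "((x div M, x mod M) = (y div M, y mod M)) = (x = y)"
      by (metis Pair_inject div_mult_mod_eq)
  next
    fix x assume "x \<in> {..<k*M}"
    then show "(x div M, x mod M) \<in> {..<k} \<times> {..<M}" using False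
      by (auto simp: less_mult_imp_div_less mult.commute)
  next
    fix p assume "p \<in> {..<k} \<times> {..<M}"
    then obtain i j where p: "p = (i,j)" "i < k" "j < M" by auto
    have "i * M + j < k * M"
    proof -
      have "i * M + j < i * M + M" using p by simp
      also have "\<dots> = Suc i * M" by simp
      also have "\<dots> \<le> k * M" using p by (intro mult_right_mono) auto
      finally show ?thesis .
    qed
    moreover have "((i * M + j) div M, (i * M + j) mod M) = (i, j)" using p False by simp
    ultimately show "\<exists>x\<in>{..<k*M}. p = (x div M, x mod M)" using p by (metis lessThan_iff)
  qed
  have "(\<Sum>l<k*M. g (l div M) (l mod M)) = (\<Sum>p\<in>{..<k} \<times> {..<M}. g (fst p) (snd p))"
    using sum.reindex_bij_betw[OF bij, of "\<lambda>p. g (fst p) (snd p)"] by simp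
  also have "\<dots> = (\<Sum>i<k. \<Sum>j<M. g i j)" by (simp add: sum.cartesian_product case_prod_beta)
  finally show ?thesis .
qed

lemma pad_sum: "(kk::nat) \<le> M \<Longrightarrow> (\<Sum>j<M. if j < kk then f j else 0) = (\<Sum>j<kk. f j :: 'b::comm_monoid_add)"
proof -
  assume "kk \<le> M"
  then have "{..<M} \<inter> {j. j < kk} = {..<kk}" by auto
  then show ?thesis using sum.inter_restrict[of "{..<M}" f "{j. j < kk}"] by simp
qed

lemma ECXE: "(D ** C) ** X ** cadj (D ** C) = D ** (C ** X ** cadj C) ** cadj (D :: 'n::finite cmat)"
  by (simp add: cadj_mult matrix_mul_assoc)

lemma trnorm_contract:
  fixes X :: "'n::finite cmat"
  assumes admC: "adm k C"
  shows "(\<Sum>i<k. trnorm (C i ** X ** cadj (C i))) \<le> trnorm X"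
proof -
  define Y where "Y = (\<lambda>i. C i ** X ** cadj (C i))"
  have "\<forall>i. \<exists>p. adm (fst p) (snd p) \<and>
          (\<Sum>j<fst p. opnorm (snd p j ** Y i ** cadj (snd p j))) = trnorm (Y i)"
  proof
    fix i
    from attain[of "Y i"] obtain kk D where "adm kk D" "(\<Sum>j<kk. opnorm (D j ** Y i ** cadj (D j))) = trnorm (Y i)"
      by (elim exE conjE)
    then show "\<exists>p. adm (fst p) (snd p) \<and>
          (\<Sum>j<fst p. opnorm (snd p j ** Y i ** cadj (snd p j))) = trnorm (Y i)"
      by (intro exI[of _ "(kk, D)"]) simp
  qed
  from choice[OF this] obtain f where f: "\<forall>i. adm (fst (f i)) (snd (f i)) \<and>
          (\<Sum>j<fst (f i). opnorm (snd (f i) j ** Y i ** cadj (snd (f i) j))) = trnorm (Y i)"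
    by (elim exE)
  define kk where "kk = (\<lambda>i. fst (f i))"
  define DD where "DD = (\<lambda>i. snd (f i))"
  have admD: "adm (kk i) (DD i)" for i unfolding kk_def DD_def using f[rule_format, of i] by (rule conjunct1)
  have valD: "(\<Sum>j<kk i. opnorm (DD i j ** Y i ** cadj (DD i j))) = trnorm (Y i)" for i
    unfolding kk_def DD_def using f[rule_format, of i] by (rule conjunct2)
  define M where "M = (\<Sum>i<k. kk i)"
  have kkM: "kk i \<le> M" if "i < k" for i
    unfolding M_def using that by (intro member_le_sum) auto
  define D' where "D' = (\<lambda>i j. if j < kk i then DD i j else 0)"
  define E where "E = (\<lambda>l. D' (l div M) (l mod M) ** C (l div M))"
  have "adm (k * M) E"
  proof -
    have "(\<Sum>l<k*M. cadj (E l) ** E l)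
          = (\<Sum>l<k*M. (\<lambda>i j. cadj (C i) ** (cadj (D' i j) ** D' i j) ** C i) (l div M) (l mod M))"
      by (simp add: E_def cadj_mult matrix_mul_assoc)
    also have "\<dots> = (\<Sum>i<k. \<Sum>j<M. cadj (C i) ** (cadj (D' i j) ** D' i j) ** C i)"
      by (rule sum_div_mod_mat)
    also have "\<dots> = (\<Sum>i<k. cadj (C i) ** (\<Sum>j<M. cadj (D' i j) ** D' i j) ** C i)"
      by (simp add: mmult_sum_left mmult_sum_right)
    also have "\<dots> = (\<Sum>i<k. cadj (C i) ** C i)"
    proof (intro sum.cong refl)
      fix i assume "i \<in> {..<k}"
      then have "(\<Sum>j<M. cadj (D' i j) ** D' i j) = (\<Sum>j<M. if j < kk i then cadj (DD i j) ** DD i j else 0)"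
        by (intro sum.cong refl) (simp add: D'_def)
      also have "\<dots> = (\<Sum>j<kk i. cadj (DD i j) ** DD i j)"
        using kkM \<open>i \<in> {..<k}\<close> by (intro pad_sum) simp
      also have "\<dots> = mat 1" using admD[of i] by (simp add: adm_def)
      finally show "cadj (C i) ** (\<Sum>j<M. cadj (D' i j) ** D' i j) ** C i = cadj (C i) ** C i"
        by simp
    qed
    also have "\<dots> = mat 1" using admC by (simp add: adm_def)
    finally show ?thesis by (simp add: adm_def)
  qed
  then have "(\<Sum>l<k*M. opnorm (E l ** X ** cadj (E l))) \<le> trnorm X" by (rule upper)
  moreover have "(\<Sum>l<k*M. opnorm (E l ** X ** cadj (E l))) = (\<Sum>i<k. trnorm (C i ** X ** cadj (C i)))"
  proof -
    have "(\<Sum>l<k*M. opnorm (E l ** X ** cadj (E l)))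
          = (\<Sum>l<k*M. (\<lambda>i j. opnorm (D' i j ** Y i ** cadj (D' i j))) (l div M) (l mod M))"
      by (simp add: E_def ECXE Y_def)
    also have "\<dots> = (\<Sum>i<k. \<Sum>j<M. opnorm (D' i j ** Y i ** cadj (D' i j)))"
      by (rule sum_div_mod)
    also have "\<dots> = (\<Sum>i<k. trnorm (Y i))"
    proof (intro sum.cong refl)
      fix i assume "i \<in> {..<k}"
      have "(\<Sum>j<M. opnorm (D' i j ** Y i ** cadj (D' i j)))
            = (\<Sum>j<M. if j < kk i then opnorm (DD i j ** Y i ** cadj (DD i j)) else 0)"
        by (intro sum.cong refl) (simp add: D'_def)
      also have "\<dots> = (\<Sum>j<kk i. opnorm (DD i j ** Y i ** cadj (DD i j)))"
        using kkM \<open>i \<in> {..<k}\<close> by (intro pad_sum) simp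
      also have "\<dots> = trnorm (Y i)" by (rule valD)
      finally show "(\<Sum>j<M. opnorm (D' i j ** Y i ** cadj (D' i j))) = trnorm (Y i)" .
    qed
    finally show ?thesis by (simp add: Y_def)
  qed
  ultimately show ?thesis by simp
qed

theorem theorem3p3:
  fixes A :: "'n::finite cmat"
  shows "trnorm A = Sup {(\<Sum>i<k. opnorm (C i ** A ** cadj (C i))) | (k::nat) C.
                           (\<Sum>i<k. cadj (C i) ** C i) = (mat 1 :: 'n cmat)}
    \<and> (is_L_norm (trnorm :: 'n cmat \<Rightarrow> real) \<and> (\<forall>X::'n cmat. opnorm X \<le> trnorm X))
    \<and> (\<forall>N :: 'n cmat \<Rightarrow> real. is_L_norm N \<and> (\<forall>X. opnorm X \<le> N X)
          \<longrightarrow> (\<forall>X. trnorm X \<le> N X))"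
proof (intro conjI)
  show "trnorm A = Sup {(\<Sum>i<k. opnorm (C i ** A ** cadj (C i))) | (k::nat) C.
                           (\<Sum>i<k. cadj (C i) ** C i) = (mat 1 :: 'n cmat)}"
  proof (rule cSup_eq_maximum[symmetric])
    obtain k C where kC: "adm k C" "(\<Sum>i<k. opnorm (C i ** A ** cadj (C i))) = trnorm A"
      using attain[of A] by blast
    have "(\<Sum>i<k. cadj (C i) ** C i) = mat 1" using kC(1) by (simp add: adm_def)
    with kC(2) have "trnorm A = (\<Sum>i<k. opnorm (C i ** A ** cadj (C i))) \<and> (\<Sum>i<k. cadj (C i) ** C i) = mat 1"
      by simp
    then show "trnorm A \<in> {(\<Sum>i<k. opnorm (C i ** A ** cadj (C i))) | (k::nat) C.
                           (\<Sum>i<k. cadj (C i) ** C i) = (mat 1 :: 'n cmat)}"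
      by (intro CollectI exI)
  next
    fix x assume "x \<in> {(\<Sum>i<k. opnorm (C i ** A ** cadj (C i))) | (k::nat) C.
                           (\<Sum>i<k. cadj (C i) ** C i) = (mat 1 :: 'n cmat)}"
    then obtain k C where "adm k C" "x = (\<Sum>i<k. opnorm (C i ** A ** cadj (C i)))"
      unfolding adm_def by auto
    then show "x \<le> trnorm A" using upper by simp
  qed
next
  show "is_L_norm (trnorm :: 'n cmat \<Rightarrow> real)"
    unfolding is_L_norm_def is_matrix_norm_def
  proof (intro conjI allI impI)
    fix X :: "'n cmat" show "0 \<le> trnorm X" by (rule trnorm_nonneg)
  next
    fix X :: "'n cmat"
    show "trnorm X = 0 \<longleftrightarrow> X = 0"
    proof
      assume "trnorm X = 0"
      then have "opnorm X = 0" using opnorm_le_trnorm[of X] opnorm_nonneg[of X] by simp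
      then show "X = 0" by (rule opnorm_eq_0)
    qed (simp add: trnorm_zero)
  next
    fix c and X :: "'n cmat"
    show "trnorm (\<chi> i j. c * X $ i $ j) = cmod c * trnorm X"
      using trnorm_smat[of c X] by (simp add: smat_def)
  next
    fix X Y :: "'n cmat" show "trnorm (X + Y) \<le> trnorm X + trnorm Y" by (rule trnorm_triangle)
  next
    fix k and C :: "nat \<Rightarrow> 'n cmat" and X :: "'n cmat"
    assume "(\<Sum>i<k. cadj (C i) ** C i) = mat 1"
    then show "(\<Sum>i<k. trnorm (C i ** X ** cadj (C i))) \<le> trnorm X"
      by (intro trnorm_contract) (simp add: adm_def)
  qed
next
  show "\<forall>X::'n cmat. opnorm X \<le> trnorm X" using opnorm_le_trnorm by blast
next
  show "\<forall>N :: 'n cmat \<Rightarrow> real. is_L_norm N \<and> (\<forall>X. opnorm X \<le> N X) \<longrightarrow> (\<forall>X. trnorm X \<le> N X)"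
  proof (intro allI impI)
    fix N :: "'n cmat \<Rightarrow> real" and X :: "'n cmat"
    assume N: "is_L_norm N \<and> (\<forall>X. opnorm X \<le> N X)"
    obtain k C where C: "adm k C" "(\<Sum>i<k. opnorm (C i ** X ** cadj (C i))) = trnorm X"
      using attain[of X] by blast
    have "trnorm X \<le> (\<Sum>i<k. N (C i ** X ** cadj (C i)))"
      unfolding C(2)[symmetric] using N by (intro sum_mono) blast
    also have "\<dots> \<le> N X" using N C(1) unfolding is_L_norm_def adm_def by blast
    finally show "trnorm X \<le> N X" .
  qed
qed

end
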